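(* Let $p,q$ be positive integers with $p/q\ge4$, let $k=\lfloor p/q\rfloor$ and $r=p-kq$, and assume $r\ge1$. Let $t$ be the smallest positive integer with $(t+1)q\equiv r\pmod p$. Consider a graph containing an edge $uv$ together with two paths $P_{uv}=u\,x_0^{uv}x_1^{uv}\cdots x_t^{uv}\,v$ and $P_{vu}=v\,x_0^{vu}x_1^{vu}\cdots x_t^{vu}\,u$. Assign lists $L(x_0^{ab})=L(x_t^{ab})=[p-1,2q-1]$ and $L(x_i^{ab})=[iq,(i+2)q-1]$ for $1\le i\le t-1$, for $(a,b)\in\{(u,v),(v,u)\}$. If $\psi$ is a $(p,q)$-colouring of $P_{uv}\cup P_{vu}$ (including the edge $uv$) such that $\psi(x)\in L(x)$ for every internal vertex $x$ of the two paths, then $\psi(u)$ and $\psi(v)$ are not both contained in $S_0=[0,q+r-1]$.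
   Context: A $(p,q)$-colouring of a graph is a map $\psi$ from its vertex set to $\{0,\dots,p-1\}$ with $q\le|\psi(x)-\psi(y)|\le p-q$ for every edge $xy$. For $a,b\in\{0,\dots,p-1\}$ the interval $[a,b]$ denotes $\{a,a+1,\dots,b\}$ with arithmetic modulo $p$ (so e.g. $[p-1,2q-1]=\{p-1,0,1,\dots,2q-1\}$); all numbers appearing as interval endpoints are reduced modulo $p$. *)

theory Defs
  imports Main
begin

text \<open>Cyclic interval [a,b] modulo p: {a, a+1, ..., b} with arithmetic mod p,
  endpoints reduced mod p.\<close>
definition cyc_interval :: "nat \<Rightarrow> nat \<Rightarrow> nat \<Rightarrow> nat set" where
  "cyc_interval p a b =
     {(a mod p + j) mod p | j. j \<le> (b mod p + p - a mod p) mod p}"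

definition pq_edge_ok :: "nat \<Rightarrow> nat \<Rightarrow> nat \<Rightarrow> nat \<Rightarrow> bool" where
  "pq_edge_ok p q x y \<longleftrightarrow>
     int q \<le> \<bar>int x - int y\<bar> \<and> \<bar>int x - int y\<bar> \<le> int p - int q"

end

theory Submission imports Defs begin


lemma edge_lift:
  assumes "pq_edge_ok p q x y" "int x mod int p = a mod int p" "int y mod int p = b mod int p"
    "\<bar>a - b\<bar> \<le> int p - int q" "0 < p"
  shows "int q \<le> \<bar>a - b\<bar>"
proof -
  have "(int x - int y - (a - b)) mod int p = 0"
    using assms(2,3) by (metis diff_diff_eq2 diff_self mod_diff_cong mod_0 diff_add_eq)
  then obtain j where j: "int x - int y - (a - b) = int p * j" by (metis dvd_def mod_0_imp_dvd)
  have e: "int q \<le> \<bar>int x - int y\<bar>" "\<bar>int x - int y\<bar> \<le> int p - int q"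
    using assms(1) unfolding pq_edge_ok_def by auto
  consider "j = 0" | "j \<ge> 1" | "j \<le> -1" by linarith
  then show ?thesis
  proof cases
    case 1 then show ?thesis using j e by simp
  next
    case 2
    have "int p * j \<ge> int p" using mult_left_mono[of 1 j "int p"] 2 by simp
    then show ?thesis using j e by linarith
  next
    case 3
    have "int p * j \<le> - int p" using mult_left_mono[of j "-1" "int p"] 3 by simp
    then show ?thesis using j e by linarith
  qed
qed

lemma cyc_lift:
  assumes "x \<in> cyc_interval p a b"
  shows "\<exists>j. j \<le> (b mod p + p - a mod p) mod p \<and> x = (a mod p + j) mod p
      \<and> int x mod int p = (int a + int j) mod int p"
proof -
  obtain j where j: "j \<le> (b mod p + p - a mod p) mod p" "x = (a mod p + j) mod p"
    using assms unfolding cyc_interval_def by auto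
  have "int x mod int p = (int a + int j) mod int p"
    using j(2) by (metis mod_add_left_eq mod_mod_trivial of_nat_add zmod_int)
  then show ?thesis using j by blast
qed

lemma len_lemma:
  fixes A d p :: nat
  assumes "d < p"
  shows "((A + d) mod p + p - A mod p) mod p = d"
proof -
  have p: "0 < p" using assms by simp
  define a0 where "a0 = A mod p"
  have a0: "a0 < p" using p a0_def by simp
  have "(A + d) mod p = (a0 + d) mod p" unfolding a0_def by (simp add: mod_add_left_eq)
  show ?thesis
  proof (cases "a0 + d < p")
    case True
    then have "(A + d) mod p = a0 + d" using \<open>(A + d) mod p = (a0 + d) mod p\<close> by simp
    then have "(A + d) mod p + p - A mod p = d + p" using a0 unfolding a0_def by simp
    then show ?thesis using assms by simp
  next
    case False
    then have "(a0 + d) mod p = a0 + d - p" using a0 assms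
      by (simp add: le_mod_geq)
    then have "(A + d) mod p = a0 + d - p" using \<open>(A + d) mod p = (a0 + d) mod p\<close> by simp
    then have "(A + d) mod p + p - A mod p = d" using False unfolding a0_def by simp
    then show ?thesis using assms by simp
  qed
qed


lemma end_lift:
  assumes "x \<in> cyc_interval p (p - 1) (2 * q - 1)" "2 * q < p" "0 < q"
  shows "x = p - 1 \<or> x \<le> 2 * q - 1"
proof -
  obtain j where j: "j \<le> ((2*q-1) mod p + p - (p-1) mod p) mod p" "x = ((p-1) mod p + j) mod p"
    using cyc_lift[OF assms(1)] by blast
  have "((2*q-1) mod p + p - (p-1) mod p) mod p = 2 * q" using assms(2,3) by simp
  then have jj: "j \<le> 2 * q" using j by simp
  show ?thesis
  proof (cases j)
    case 0 then show ?thesis using j assms by simp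
  next
    case (Suc m)
    have "x = (p + m) mod p" using j Suc assms by simp
    then have "x = m" using jj Suc assms by simp
    then show ?thesis using jj Suc by linarith
  qed
qed

lemma mid_lift:
  assumes "x \<in> cyc_interval p (i * q) ((i + 2) * q - 1)" "2 * q < p" "0 < q"
  shows "\<exists>j. j \<le> 2 * q - 1 \<and> int x mod int p = (int (i * q) + int j) mod int p"
proof -
  obtain j where j: "j \<le> (((i + 2) * q - 1) mod p + p - (i*q) mod p) mod p"
     "int x mod int p = (int (i*q) + int j) mod int p"
    using cyc_lift[OF assms(1)] by blast
  have e: "(i + 2) * q - 1 = i * q + (2 * q - 1)" using assms(3) by (simp add: algebra_simps)
  have "(((i + 2) * q - 1) mod p + p - (i*q) mod p) mod p = 2 * q - 1"
    unfolding e by (rule len_lemma) (use assms in simp)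
  then show ?thesis using j by auto
qed


lemma main_lemma:
  fixes p q r t c1 c2 :: nat and x :: "nat \<Rightarrow> nat"
  assumes q: "0 < q" and pq: "4 * q \<le> p" and rq: "r < q" and r1: "1 \<le> r" and t: "0 < t"
    and cong: "int ((t + 1) * q) mod int p = int r mod int p"
    and c2: "c2 \<le> q + r - 1" and c12: "c1 + q \<le> c2"
    and e0: "pq_edge_ok p q c1 (x 0)" and es: "\<forall>i<t. pq_edge_ok p q (x i) (x (Suc i))"
    and et: "pq_edge_ok p q (x t) c2"
    and l0: "x 0 \<in> cyc_interval p (p - 1) (2 * q - 1)"
    and lt: "x t \<in> cyc_interval p (p - 1) (2 * q - 1)"
    and li: "\<forall>i. 1 \<le> i \<and> i \<le> t - 1 \<longrightarrow> x i \<in> cyc_interval p (i * q) ((i + 2) * q - 1)"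
    and xr: "x 0 < p" "x t < p"
  shows False
proof -
  have p: "0 < p" "2 * q < p" using q pq by auto
  have c1r: "c1 + 1 \<le> r" using c2 c12 r1 by linarith
  have x0: "int c1 + int q \<le> int (x 0) \<and> int (x 0) \<le> 2 * int q - 1"
  proof (cases "x 0 = p - 1")
    case True
    then show ?thesis using e0 c1r rq pq unfolding pq_edge_ok_def by auto
  next
    case False
    then have "x 0 \<le> 2 * q - 1" using end_lift[OF l0 p(2) q] by simp
    then show ?thesis using e0 c1r rq pq q unfolding pq_edge_ok_def by auto
  qed
  have claim: "i \<le> t - 1 \<Longrightarrow> \<exists>y::int. int (x i) mod int p = y mod int p \<and>
      int c1 + int (i + 1) * int q \<le> y \<and> y \<le> int (i + 2) * int q - 1" for i
  proof (induction i)
    case 0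
    then show ?case using x0 by (intro exI[of _ "int (x 0)"]) auto
  next
    case (Suc i)
    then obtain y where y: "int (x i) mod int p = y mod int p"
      "int c1 + int (i + 1) * int q \<le> y" "y \<le> int (i + 2) * int q - 1" by auto
    have "x (Suc i) \<in> cyc_interval p (Suc i * q) ((Suc i + 2) * q - 1)"
      using li Suc.prems by auto
    then obtain j where j: "j \<le> 2 * q - 1"
      "int (x (Suc i)) mod int p = (int (Suc i * q) + int j) mod int p"
      using mid_lift p q by blast
    define y' where "y' = int (Suc i * q) + int j"
    have ed: "pq_edge_ok p q (x i) (x (Suc i))" using es Suc.prems t by auto
    have b1: "y' - y \<ge> 1 - int q" using y j q unfolding y'_def by (simp add: algebra_simps)
    have b2: "y' - y \<le> 2 * int q - 1" using y j q unfolding y'_def by (simp add: algebra_simps)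
    have "\<bar>y - y'\<bar> \<le> int p - int q" using b1 b2 pq by linarith
    then have "int q \<le> \<bar>y - y'\<bar>" using edge_lift[OF ed y(1) j(2)[folded y'_def]] p by blast
    then have "y' \<ge> y + int q" using b1 by linarith
    moreover have "y' \<le> int (Suc i + 2) * int q - 1" using j q unfolding y'_def
      by (simp add: algebra_simps)
    moreover have "int (x (Suc i)) mod int p = y' mod int p" using j(2) unfolding y'_def .
    moreover have "int c1 + int (Suc i + 1) * int q \<le> y' " using \<open>y' \<ge> y + int q\<close> y(2)
      by (simp add: algebra_simps)
    ultimately show ?case by blast
  qed
  obtain y where y: "int (x (t - 1)) mod int p = y mod int p"
      "int c1 + int t * int q \<le> y" "y \<le> int (t + 1) * int q - 1"
    using claim[of "t - 1"] t by (auto simp: Suc_diff_1)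
  define w where "w = y - int ((t + 1) * q) + int r"
  have dv: "int p dvd int ((t + 1) * q) - int r" using cong by (simp add: mod_eq_dvd_iff)
  have "int p dvd w - y" proof -
    have "w - y = - (int ((t + 1) * q) - int r)" unfolding w_def by simp
    then show ?thesis using dvd_minus_iff dv by metis
  qed
  then have "w mod int p = y mod int p" by (simp add: mod_eq_dvd_iff)
  then have wm: "int (x (t - 1)) mod int p = w mod int p" using y(1) by simp
  have w1: "int c1 + int r - int q \<le> w" "w \<le> int r - 1" using y unfolding w_def
    by (auto simp: algebra_simps)
  have ed: "pq_edge_ok p q (x (t - 1)) (x t)" using es t
    by (metis Suc_diff_1 diff_less zero_less_one)
  show False
  proof (cases "x t = p - 1")
    case True
    have "int (x t) = int p + (-1)" using True p by simp
    then have zm: "int (x t) mod int p = (-1) mod int p" by simp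
    have "\<bar>w - (-1)\<bar> \<le> int p - int q" using w1 pq rq by linarith
    then have "int q \<le> \<bar>w - (-1)\<bar>" using edge_lift[OF ed wm zm] p by blast
    then show False using w1 rq by linarith
  next
    case False
    then have xt: "x t \<le> 2 * q - 1" using end_lift[OF lt p(2) q] by simp
    have "\<bar>w - int (x t)\<bar> \<le> int p - int q" using w1 pq rq xt by linarith
    then have "int q \<le> \<bar>w - int (x t)\<bar>" using edge_lift[OF ed wm refl] p by blast
    then have "int (x t) \<ge> int c1 + int r" using w1 rq by linarith
    then show False using et xt c2 c12 q unfolding pq_edge_ok_def by auto
  qed
qed


lemma s0_lift:
  assumes "c \<in> cyc_interval p 0 b" "b < p"
  shows "c \<le> b"
proof -
  obtain j where j: "j \<le> (b mod p + p - 0 mod p) mod p" "c = (0 mod p + j) mod p"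
    using cyc_lift[OF assms(1)] by blast
  have "(b mod p + p - 0 mod p) mod p = b" using assms(2) by simp
  then show ?thesis using j assms(2) by simp
qed

theorem proposition3p2:
  fixes p q k r t :: nat
    and cu cv :: nat
    and xuv xvu :: "nat \<Rightarrow> nat"
  assumes q_pos: "0 < q"
    and ratio: "4 * q \<le> p"
    and k_def: "k = p div q"
    and r_def: "r = p - k * q"
    and r_pos: "1 \<le> r"
    and t_pos: "0 < t"
    and t_cong: "(t + 1) * q mod p = r mod p"
    and t_min: "\<forall>s. 0 < s \<and> s < t \<longrightarrow> (s + 1) * q mod p \<noteq> r mod p"
    and range: "cu < p" "cv < p" "\<forall>i\<le>t. xuv i < p \<and> xvu i < p"
    and edge_uv: "pq_edge_ok p q cu cv"
    and path_uv: "pq_edge_ok p q cu (xuv 0)"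
      "\<forall>i<t. pq_edge_ok p q (xuv i) (xuv (Suc i))"
      "pq_edge_ok p q (xuv t) cv"
    and path_vu: "pq_edge_ok p q cv (xvu 0)"
      "\<forall>i<t. pq_edge_ok p q (xvu i) (xvu (Suc i))"
      "pq_edge_ok p q (xvu t) cu"
    and lists_uv: "xuv 0 \<in> cyc_interval p (p - 1) (2 * q - 1)"
      "xuv t \<in> cyc_interval p (p - 1) (2 * q - 1)"
      "\<forall>i. 1 \<le> i \<and> i \<le> t - 1 \<longrightarrow> xuv i \<in> cyc_interval p (i * q) ((i + 2) * q - 1)"
    and lists_vu: "xvu 0 \<in> cyc_interval p (p - 1) (2 * q - 1)"
      "xvu t \<in> cyc_interval p (p - 1) (2 * q - 1)"
      "\<forall>i. 1 \<le> i \<and> i \<le> t - 1 \<longrightarrow> xvu i \<in> cyc_interval p (i * q) ((i + 2) * q - 1)"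
  shows "\<not> (cu \<in> cyc_interval p 0 (q + r - 1) \<and> cv \<in> cyc_interval p 0 (q + r - 1))"
  proof
  assume S: "cu \<in> cyc_interval p 0 (q + r - 1) \<and> cv \<in> cyc_interval p 0 (q + r - 1)"
  have rq: "r < q" using r_def k_def q_pos by (simp add: minus_div_mult_eq_mod)
  have b: "q + r - 1 < p" using rq ratio by linarith
  have cu: "cu \<le> q + r - 1" and cv: "cv \<le> q + r - 1" using S s0_lift b by blast+
  have cong: "int ((t + 1) * q) mod int p = int r mod int p"
    using t_cong by (metis of_nat_mod)
  have "int q \<le> \<bar>int cu - int cv\<bar>" using edge_uv unfolding pq_edge_ok_def by simp
  then consider "cu + q \<le> cv" | "cv + q \<le> cu" by linarith
  then show False
  proof cases
    case 1
    show False
      by (rule main_lemma[of q p r t cv cu xuv]) (use assms rq cong cv 1 in auto)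
  next
    case 2
    show False
      by (rule main_lemma[of q p r t cu cv xvu]) (use assms rq cong cu 2 in auto)
  qed
qed

end
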